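(* Let $X$ be a topological space in which every open set is a union of countably many clopen sets. Then $X$ is a QN space if, and only if, for every Borel function $\Psi:X\to\mathbb{N}^{\mathbb{N}}$, $\Psi[X]$ is bounded.
   Context: For a metric space $Y$, $f:X\to Y$ is a quasi-normal limit of $f_n:X\to Y$ if there are positive reals $\epsilon_n\to0$ such that for each $x\in X$, $d(f_n(x),f(x))<\epsilon_n$ for all but finitely many $n$. $X$ is a QN space if whenever a sequence of continuous real-valued functions on $X$ converges pointwise to $0$, it converges to $0$ quasi-normally. $\Psi:X\to\mathbb{N}^{\mathbb{N}}$ is Borel if preimages of open sets are Borel. $Y\subseteq\mathbb{N}^{\mathbb{N}}$ is bounded if there is $g\in\mathbb{N}^{\mathbb{N}}$ such that each $f\in Y$ satisfies $f(n)\le g(n)$ for all but finitely many $n$. *)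

theory Defs
  imports "HOL-Analysis.Analysis"
begin

definition quasi_normal_limit :: "(nat \<Rightarrow> 'a \<Rightarrow> 'b::metric_space) \<Rightarrow> ('a \<Rightarrow> 'b) \<Rightarrow> bool" where
  "quasi_normal_limit fs f \<longleftrightarrow>
     (\<exists>\<epsilon>::nat \<Rightarrow> real. (\<forall>n. \<epsilon> n > 0) \<and> \<epsilon> \<longlonglongrightarrow> 0 \<and>
        (\<forall>x. \<forall>\<^sub>F n in sequentially. dist (fs n x) (f x) < \<epsilon> n))"

definition QN_space :: "'a::topological_space itself \<Rightarrow> bool" where
  "QN_space _ \<longleftrightarrow>
     (\<forall>fs :: nat \<Rightarrow> 'a \<Rightarrow> real.
        (\<forall>n. continuous_on UNIV (fs n)) \<and> (\<forall>x. (\<lambda>n. fs n x) \<longlonglongrightarrow> 0)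
        \<longrightarrow> quasi_normal_limit fs (\<lambda>x. 0))"

text \<open>Borel function: preimages of open sets are Borel. nat => nat carries the product
  (Baire space) topology, nat the discrete (order) topology.\<close>
definition Borel_function :: "('a::topological_space \<Rightarrow> 'b::topological_space) \<Rightarrow> bool" where
  "Borel_function \<Psi> \<longleftrightarrow> (\<forall>U. open U \<longrightarrow> \<Psi> -` U \<in> sets borel)"

definition bounded_baire :: "(nat \<Rightarrow> nat) set \<Rightarrow> bool" where
  "bounded_baire Y \<longleftrightarrow> (\<exists>g::nat \<Rightarrow> nat. \<forall>f\<in>Y. \<forall>\<^sub>F n in sequentially. f n \<le> g n)"

end

theory Submission
  imports Defs
begin

definition clopen :: "'a::topological_space set \<Rightarrow> bool" where
  "clopen S \<longleftrightarrow> open S \<and> closed S"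

definition Fsig :: "'a::topological_space set \<Rightarrow> bool" where
  "Fsig A \<longleftrightarrow> (\<exists>F::nat \<Rightarrow> 'a set. (\<forall>n. closed (F n)) \<and> A = \<Union>(range F))"

lemma open_clopen_seq:
  assumes hyp: "\<forall>U::'a::topological_space set. open U \<longrightarrow>
             (\<exists>\<C>. countable \<C> \<and> (\<forall>C\<in>\<C>. open C \<and> closed C) \<and> U = \<Union>\<C>)"
    and "open U"
  shows "\<exists>c::nat \<Rightarrow> 'a set. (\<forall>i. clopen (c i)) \<and> U = \<Union>(range c)"
proof -
  obtain \<C> where C: "countable \<C>" "\<forall>C\<in>\<C>. open C \<and> closed C" "U = \<Union>\<C>"
    using hyp assms(2) by blast
  show ?thesis
  proof (cases "\<C> = {}")
    case True
    then show ?thesis using C by (intro exI[of _ "\<lambda>_. {}"]) (auto simp: clopen_def)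
  next
    case False
    then show ?thesis using C
      by (intro exI[of _ "from_nat_into \<C>"]) (auto simp: clopen_def from_nat_into)
  qed
qed

lemma phi_cont:
  fixes S :: "nat \<Rightarrow> 'a::topological_space set"
  assumes cl: "\<And>k. clopen (S k)"
  shows "continuous_on UNIV (\<lambda>x. if \<exists>k. x \<notin> S k then (1/2::real)^(LEAST k. x \<notin> S k) else 0)"
proof -
  define f where "f = (\<lambda>x. if \<exists>k. x \<notin> S k then (1/2::real)^(LEAST k. x \<notin> S k) else 0)"
  have "continuous_on UNIV f"
  unfolding continuous_on_def
  proof (intro ballI)
  fix x :: 'a
  show "(f \<longlongrightarrow> f x) (at x within UNIV)"
  proof (rule tendstoI)
    fix e :: real assume e: "e > 0"
    show "\<forall>\<^sub>F y in at x within UNIV. dist (f y) (f x) < e"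
    proof (cases "\<exists>k. x \<notin> S k")
      case True
      define k0 where "k0 = (LEAST k. x \<notin> S k)"
      have xk0: "x \<notin> S k0" unfolding k0_def using True by (rule LeastI_ex)
      have xlt: "\<And>k. k < k0 \<Longrightarrow> x \<in> S k" unfolding k0_def using not_less_Least by blast
      have fx: "f x = (1/2)^k0" unfolding f_def k0_def using True by simp
      define N where "N = - S k0 \<inter> (\<Inter>k\<in>{..<k0}. S k)"
      have "open N" unfolding N_def using cl unfolding clopen_def by (intro open_Int open_Compl open_INT) auto
      moreover have "x \<in> N" using xk0 xlt by (auto simp: N_def)
      moreover have "\<forall>y\<in>N. dist (f y) (f x) < e"
      proof
        fix y assume "y \<in> N"
        then have yk0: "y \<notin> S k0" and ylt: "\<And>k. k < k0 \<Longrightarrow> y \<in> S k" by (auto simp: N_def)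
        have "(LEAST k. y \<notin> S k) = k0"
        proof (rule Least_equality)
          show "y \<notin> S k0" by (fact yk0)
          fix k assume "y \<notin> S k" then show "k0 \<le> k" using ylt by (meson not_le)
        qed
        then have "f y = (1/2)^k0" unfolding f_def using yk0 by auto
        then show "dist (f y) (f x) < e" using fx e by simp
      qed
      ultimately show ?thesis unfolding eventually_at_topological by blast
    next
      case False
      then have fx: "f x = 0" unfolding f_def by simp
      obtain K where K: "(1/2::real)^K < e" using real_arch_pow_inv[OF e, of "1/2"] by auto
      define N where "N = (\<Inter>k\<in>{..K}. S k)"
      have "open N" unfolding N_def using cl unfolding clopen_def by (intro open_INT) auto
      moreover have "x \<in> N" using False by (auto simp: N_def)
      moreover have "\<forall>y\<in>N. dist (f y) (f x) < e"
      proof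
        fix y assume yN: "y \<in> N"
        have "\<bar>f y\<bar> < e"
        proof (cases "\<exists>k. y \<notin> S k")
          case True
          define L where "L = (LEAST k. y \<notin> S k)"
          have "y \<notin> S L" unfolding L_def using True by (rule LeastI_ex)
          have "L > K"
          proof (rule ccontr)
            assume "\<not> K < L" then have "L \<in> {..K}" by simp
            then have "y \<in> S L" using yN by (auto simp: N_def)
            then show False using \<open>y \<notin> S L\<close> by simp
          qed
          then have a: "(1/2::real)^L < (1/2)^K" by (intro power_strict_decreasing) auto
          have "f y = (1/2)^L" unfolding f_def L_def using True by simp
          then have "\<bar>f y\<bar> = (1/2)^L" by simp
          then show ?thesis using a K by linarith
        next
          case False
          then have "f y = 0" unfolding f_def by simp
          then show ?thesis using e by simp
        qed
        then show "dist (f y) (f x) < e" using fx by (simp add: dist_real_def)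
      qed
      ultimately show ?thesis unfolding eventually_at_topological by blast
    qed
  qed
  qed
  then show ?thesis unfolding f_def .
qed


lemma phi_small:
  assumes "\<And>k. k \<le> K \<Longrightarrow> x \<in> S k"
  shows "\<bar>if \<exists>k. x \<notin> S k then (1/2::real)^(LEAST k. x \<notin> S k) else 0\<bar> \<le> (1/2)^(Suc K)"
proof (cases "\<exists>k. x \<notin> S k")
  case True
  define L where "L = (LEAST k. x \<notin> S k)"
  have "x \<notin> S L" unfolding L_def using True by (rule LeastI_ex)
  then have "\<not> L \<le> K" using assms by blast
  then have "Suc K \<le> L" by simp
  then have a: "(1/2::real)^L \<le> (1/2)^(Suc K)" by (intro power_decreasing) auto
  have "\<bar>if \<exists>k. x \<notin> S k then (1/2::real)^(LEAST k. x \<notin> S k) else 0\<bar> = (1/2)^L"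
    using True L_def by simp
  then show ?thesis using a by linarith
qed simp

lemma phi_large:
  assumes "x \<notin> S k"
  shows "(1/2::real)^k \<le> (if \<exists>k. x \<notin> S k then (1/2::real)^(LEAST k. x \<notin> S k) else 0)"
proof -
  have ex: "\<exists>k. x \<notin> S k" using assms by blast
  have "(LEAST k. x \<notin> S k) \<le> k" using assms by (rule Least_le)
  then have "(1/2::real)^k \<le> (1/2)^(LEAST k. x \<notin> S k)" by (intro power_decreasing) auto
  then show ?thesis using ex by simp
qed

lemma T_clopen:
  fixes C :: "nat \<Rightarrow> nat \<Rightarrow> 'a::topological_space set"
  assumes QN: "QN_space TYPE('a)" and cl: "\<And>k n. clopen (C k n)"
    and gam: "\<And>k x. eventually (\<lambda>n. x \<in> C k n) sequentially"
  shows "\<exists>g. \<forall>x. eventually (\<lambda>k. \<forall>n\<ge>g k. x \<in> C k n) sequentially"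
proof -
  define fs where "fs = (\<lambda>n x. if \<exists>k. x \<notin> C k n then (1/2::real)^(LEAST k. x \<notin> C k n) else 0)"
  have cont: "\<forall>n. continuous_on UNIV (fs n)"
  proof
    fix n show "continuous_on UNIV (fs n)"
      using phi_cont[of "\<lambda>k. C k n"] cl unfolding fs_def by simp
  qed
  have conv: "\<forall>x. (\<lambda>n. fs n x) \<longlonglongrightarrow> 0"
  proof
    fix x
    show "(\<lambda>n. fs n x) \<longlonglongrightarrow> 0"
    proof (rule tendstoI)
      fix e :: real assume e: "e > 0"
      obtain K where K: "(1/2::real)^K < e" using real_arch_pow_inv[OF e, of "1/2"] by auto
      have "eventually (\<lambda>n. \<forall>k\<in>{..K}. x \<in> C k n) sequentially"
        by (rule eventually_ball_finite) (auto intro: gam)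
      then show "eventually (\<lambda>n. dist (fs n x) 0 < e) sequentially"
      proof (rule eventually_mono)
        fix n assume "\<forall>k\<in>{..K}. x \<in> C k n"
        then have "\<bar>fs n x\<bar> \<le> (1/2)^(Suc K)" unfolding fs_def by (intro phi_small) auto
        moreover have "(1/2::real)^(Suc K) \<le> (1/2)^K" by (intro power_decreasing) auto
        ultimately show "dist (fs n x) 0 < e" using K by simp
      qed
    qed
  qed
  obtain \<epsilon> :: "nat \<Rightarrow> real" where epos: "\<forall>n. \<epsilon> n > 0" and elim: "\<epsilon> \<longlonglongrightarrow> 0"
    and ev: "\<forall>x. \<forall>\<^sub>F n in sequentially. dist (fs n x) 0 < \<epsilon> n"
    using QN cont conv unfolding QN_space_def quasi_normal_limit_def by blast
  have "\<forall>k. \<exists>N. \<forall>n\<ge>N. \<epsilon> n < (1/2)^k"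
  proof
    fix k
    obtain N where "\<forall>n\<ge>N. norm (\<epsilon> n - 0) < (1/2::real)^k"
      using LIMSEQ_D[OF elim, of "(1/2)^k"] by auto
    then have "\<forall>n\<ge>N. \<epsilon> n < (1/2)^k" using epos by (metis abs_of_pos diff_zero real_norm_def)
    then show "\<exists>N. \<forall>n\<ge>N. \<epsilon> n < (1/2)^k" by blast
  qed
  then obtain N where N: "\<And>k n. n \<ge> N k \<Longrightarrow> \<epsilon> n < (1/2)^k" by metis
  define g where "g k = max k (N k)" for k
  have "\<forall>x. eventually (\<lambda>k. \<forall>n\<ge>g k. x \<in> C k n) sequentially"
  proof
    fix x
    obtain M where M: "\<And>n. n \<ge> M \<Longrightarrow> dist (fs n x) 0 < \<epsilon> n"
      using ev unfolding eventually_sequentially by blast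
    show "eventually (\<lambda>k. \<forall>n\<ge>g k. x \<in> C k n) sequentially"
      unfolding eventually_sequentially
    proof (intro exI allI impI)
      fix k n assume kM: "M \<le> k" and ng: "g k \<le> n"
      show "x \<in> C k n"
      proof (rule ccontr)
        assume "x \<notin> C k n"
        then have a: "(1/2::real)^k \<le> fs n x" unfolding fs_def by (rule phi_large)
        have b: "fs n x < \<epsilon> n" using M[of n] kM ng by (auto simp: g_def dist_real_def)
        have c: "\<epsilon> n < (1/2)^k" using N[of k n] ng by (auto simp: g_def)
        show False using a b c by linarith
      qed
    qed
  qed
  then show ?thesis by blast
qed


lemma closed_approx:
  fixes F :: "nat \<Rightarrow> 'a::topological_space set"
  assumes hyp: "\<forall>U::'a set. open U \<longrightarrow>
             (\<exists>\<C>. countable \<C> \<and> (\<forall>C\<in>\<C>. open C \<and> closed C) \<and> U = \<Union>\<C>)"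
    and cl: "\<And>m. closed (F m)" and mono: "\<And>m. F m \<subseteq> F (Suc m)"
  shows "\<exists>D::nat\<Rightarrow>nat\<Rightarrow>'a set. (\<forall>m i. clopen (D m i)) \<and> (\<forall>m i. D m i \<subseteq> D (Suc m) i)
     \<and> (\<forall>m i. D m (Suc i) \<subseteq> D m i) \<and> (\<forall>m i. F m \<subseteq> D m i) \<and> (\<forall>m x. (\<forall>i. x \<in> D m i) \<longrightarrow> x \<in> F m)"
proof -
  have "\<forall>m. \<exists>c::nat\<Rightarrow>'a set. (\<forall>j. clopen (c j)) \<and> - F m = \<Union>(range c)"
  proof
    fix m show "\<exists>c::nat\<Rightarrow>'a set. (\<forall>j. clopen (c j)) \<and> - F m = \<Union>(range c)"
      using open_clopen_seq[OF hyp, of "- F m"] cl[of m] by (simp add: open_Compl)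
  qed
  from choice[OF this] obtain c :: "nat \<Rightarrow> nat \<Rightarrow> 'a set" where c: "\<forall>m. (\<forall>j. clopen (c m j)) \<and> - F m = \<Union>(range (c m))" by blast
  then have c1: "\<And>m j. clopen (c m j)" and c2: "\<And>m. - F m = \<Union>(range (c m))" by auto
  define R where "R m i = (\<Union>j\<in>{..i}. \<Union>m'\<in>{m..i}. c m' j)" for m i
  define D where "D m i = - R m i" for m i
  have Rcl: "clopen (R m i)" for m i
  proof -
    have "open (R m i)" unfolding R_def using c1 unfolding clopen_def by (intro open_UN) auto
    moreover have "closed (R m i)" unfolding R_def using c1 unfolding clopen_def
      by (intro closed_UN) auto
    ultimately show ?thesis by (simp add: clopen_def)
  qed
  have 1: "\<forall>m i. clopen (D m i)" using Rcl unfolding D_def clopen_def by (simp add: open_Compl closed_Compl)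
  have 2: "\<forall>m i. D m i \<subseteq> D (Suc m) i" unfolding D_def R_def by auto
  have 3: "\<forall>m i. D m (Suc i) \<subseteq> D m i" unfolding D_def R_def by force
  have 4: "\<forall>m i. F m \<subseteq> D m i"
  proof (intro allI subsetI)
    fix m i x assume xF: "x \<in> F m"
    show "x \<in> D m i"
    proof (rule ccontr)
      assume "x \<notin> D m i"
      then obtain j m' where "m \<le> m'" "x \<in> c m' j" unfolding D_def R_def by auto
      then have "x \<notin> F m'" using c2[of m'] by auto
      moreover have "F m \<subseteq> F m'" using lift_Suc_mono_le[of F, OF mono \<open>m \<le> m'\<close>] .
      ultimately show False using xF by blast
    qed
  qed
  have 5: "\<forall>m x. (\<forall>i. x \<in> D m i) \<longrightarrow> x \<in> F m"
  proof (intro allI impI)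
    fix m x assume all: "\<forall>i. x \<in> D m i"
    show "x \<in> F m"
    proof (rule ccontr)
      assume "x \<notin> F m"
      then obtain j where j: "x \<in> c m j" using c2[of m] by auto
      then have "x \<in> R m (max j m)" unfolding R_def by force
      then show False using all unfolding D_def by auto
    qed
  qed
  show ?thesis using 1 2 3 4 5 by blast
qed


lemma H_closed:
  fixes F :: "nat \<Rightarrow> nat \<Rightarrow> 'a::topological_space set"
  assumes QN: "QN_space TYPE('a)"
    and hyp: "\<forall>U::'a set. open U \<longrightarrow>
             (\<exists>\<C>. countable \<C> \<and> (\<forall>C\<in>\<C>. open C \<and> closed C) \<and> U = \<Union>\<C>)"
    and cl: "\<And>k m. closed (F k m)" and mono: "\<And>k m. F k m \<subseteq> F k (Suc m)"
    and cov: "\<And>k x. \<exists>m. x \<in> F k m"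
  shows "\<exists>g::nat\<Rightarrow>nat. \<forall>x. eventually (\<lambda>k. x \<in> F k (g k)) sequentially"
proof -
  have "\<forall>k. \<exists>D::nat\<Rightarrow>nat\<Rightarrow>'a set. (\<forall>m i. clopen (D m i)) \<and> (\<forall>m i. D m i \<subseteq> D (Suc m) i)
     \<and> (\<forall>m i. D m (Suc i) \<subseteq> D m i) \<and> (\<forall>m i. F k m \<subseteq> D m i) \<and> (\<forall>m x. (\<forall>i. x \<in> D m i) \<longrightarrow> x \<in> F k m)"
  proof
    fix k show "\<exists>D::nat\<Rightarrow>nat\<Rightarrow>'a set. (\<forall>m i. clopen (D m i)) \<and> (\<forall>m i. D m i \<subseteq> D (Suc m) i)
     \<and> (\<forall>m i. D m (Suc i) \<subseteq> D m i) \<and> (\<forall>m i. F k m \<subseteq> D m i) \<and> (\<forall>m x. (\<forall>i. x \<in> D m i) \<longrightarrow> x \<in> F k m)"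
      by (rule closed_approx[OF hyp, of "F k", OF cl mono])
  qed
  from choice[OF this] obtain D :: "nat \<Rightarrow> nat \<Rightarrow> nat \<Rightarrow> 'a set" where D:
    "\<forall>k. (\<forall>m i. clopen (D k m i)) \<and> (\<forall>m i. D k m i \<subseteq> D k (Suc m) i)
     \<and> (\<forall>m i. D k m (Suc i) \<subseteq> D k m i) \<and> (\<forall>m i. F k m \<subseteq> D k m i) \<and> (\<forall>m x. (\<forall>i. x \<in> D k m i) \<longrightarrow> x \<in> F k m)"
    by blast
  have Dcl: "\<And>k m i. clopen (D k m i)" using D by simp
  have Dm: "\<And>k m i. D k m i \<subseteq> D k (Suc m) i" using D by simp
  have Di: "\<And>k m i. D k m (Suc i) \<subseteq> D k m i" using D by simp
  have FD: "\<And>k m i. F k m \<subseteq> D k m i" using D by simp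
  have DF: "\<And>k m x. (\<forall>i. x \<in> D k m i) \<Longrightarrow> x \<in> F k m" using D by simp
  have Dm': "D k m i \<subseteq> D k m' i" if "m \<le> m'" for k m m' i
    by (rule lift_Suc_mono_le[of "\<lambda>m. D k m i"]) (simp_all add: Dm that)
  have Di': "D k m i' \<subseteq> D k m i" if "i \<le> i'" for k m i i'
    by (rule lift_Suc_antimono_le[of "\<lambda>i. D k m i"]) (simp_all add: Di that)
  have Fm': "F k m \<subseteq> F k m'" if "m \<le> m'" for k m m'
    by (rule lift_Suc_mono_le[of "\<lambda>m. F k m"]) (simp_all add: mono that)
  define Y where "Y k i = {x. \<forall>m. x \<in> D k m i \<longrightarrow> x \<in> D k m (Suc i)}" for k i
  have Ycl: "clopen (Y k i)" for k i
  proof -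
    have eq: "Y k i = (\<Inter>m. - D k m i \<union> D k m (Suc i))" unfolding Y_def by auto
    have "closed (Y k i)" unfolding eq using Dcl unfolding clopen_def
      by (intro closed_INT ballI closed_Un closed_Compl) auto
    moreover have "open (Y k i)"
    proof (rule open_subopen[THEN iffD2], rule ballI)
      fix x assume xY: "x \<in> Y k i"
      obtain m0 where "x \<in> F k m0" using cov by blast
      then have ex: "\<exists>m. x \<in> D k m i" using FD by blast
      define p where "p = (LEAST m. x \<in> D k m i)"
      have xp: "x \<in> D k p i" unfolding p_def using ex by (rule LeastI_ex)
      have xlt: "\<And>m. m < p \<Longrightarrow> x \<notin> D k m i" unfolding p_def using not_less_Least by blast
      define T where "T = D k p (Suc i) \<inter> (\<Inter>m\<in>{..<p}. - D k m i)"
      have "open T" unfolding T_def using Dcl unfolding clopen_def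
        by (intro open_Int open_INT ballI open_Compl) auto
      moreover have "x \<in> T" unfolding T_def using xp xY xlt unfolding Y_def by auto
      moreover have "T \<subseteq> Y k i"
      proof
        fix y assume yT: "y \<in> T"
        show "y \<in> Y k i" unfolding Y_def
        proof (intro CollectI allI impI)
          fix m assume ym: "y \<in> D k m i"
          have "\<not> m < p" using yT ym unfolding T_def by auto
          then have "p \<le> m" by simp
          then show "y \<in> D k m (Suc i)" using Dm'[of p m k "Suc i"] yT unfolding T_def by auto
        qed
      qed
      ultimately show "\<exists>T. open T \<and> x \<in> T \<and> T \<subseteq> Y k i" by blast
    qed
    ultimately show ?thesis by (simp add: clopen_def)
  qed
  have Ygam: "eventually (\<lambda>i. x \<in> Y k i) sequentially" for k x
  proof -
    obtain m0 where m0: "x \<in> F k m0" using cov by blast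
    have "\<forall>m\<in>{..<m0}. eventually (\<lambda>i. x \<in> D k m i \<longrightarrow> x \<in> D k m (Suc i)) sequentially"
    proof
      fix m
      show "eventually (\<lambda>i. x \<in> D k m i \<longrightarrow> x \<in> D k m (Suc i)) sequentially"
      proof (cases "x \<in> F k m")
        case True
        then have "\<forall>i. x \<in> D k m (Suc i)" using FD by blast
        then show ?thesis by (simp add: always_eventually)
      next
        case False
        then obtain i0 where "x \<notin> D k m i0" using DF by blast
        then have "\<forall>i\<ge>i0. x \<notin> D k m i" using Di' by blast
        then show ?thesis unfolding eventually_sequentially by blast
      qed
    qed
    then have "eventually (\<lambda>i. \<forall>m\<in>{..<m0}. x \<in> D k m i \<longrightarrow> x \<in> D k m (Suc i)) sequentially"
      by (intro eventually_ball_finite) auto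
    then show ?thesis
    proof (rule eventually_mono)
      fix i assume a: "\<forall>m\<in>{..<m0}. x \<in> D k m i \<longrightarrow> x \<in> D k m (Suc i)"
      show "x \<in> Y k i" unfolding Y_def
      proof (intro CollectI allI impI)
        fix m assume xm: "x \<in> D k m i"
        show "x \<in> D k m (Suc i)"
        proof (cases "m < m0")
          case True then show ?thesis using a xm by auto
        next
          case False
          then have "x \<in> F k m" using Fm'[of m0 m k] m0 by auto
          then show ?thesis using FD by blast
        qed
      qed
    qed
  qed
  obtain h where h: "\<forall>x. eventually (\<lambda>k. \<forall>i\<ge>h k. x \<in> Y k i) sequentially"
    using T_clopen[where C=Y, OF QN Ycl Ygam] by blast
  have gam2: "eventually (\<lambda>m. x \<in> D k m (h k)) sequentially" for k x
  proof -
    obtain m0 where m0: "x \<in> F k m0" using cov by blast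
    have "\<forall>m\<ge>m0. x \<in> D k m (h k)" using Fm' m0 FD by blast
    then show ?thesis unfolding eventually_sequentially by blast
  qed
  obtain g where g: "\<forall>x. eventually (\<lambda>k. \<forall>m\<ge>g k. x \<in> D k m (h k)) sequentially"
    using T_clopen[where C="\<lambda>k m. D k m (h k)", OF QN Dcl gam2] by blast
  have "\<forall>x. eventually (\<lambda>k. x \<in> F k (g k)) sequentially"
  proof
    fix x
    have "eventually (\<lambda>k. (\<forall>i\<ge>h k. x \<in> Y k i) \<and> (\<forall>m\<ge>g k. x \<in> D k m (h k))) sequentially"
      using h g by (intro eventually_conj) auto
    then show "eventually (\<lambda>k. x \<in> F k (g k)) sequentially"
    proof (rule eventually_mono)
      fix k assume a: "(\<forall>i\<ge>h k. x \<in> Y k i) \<and> (\<forall>m\<ge>g k. x \<in> D k m (h k))"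
      then have base: "x \<in> D k (g k) (h k)" by auto
      have "x \<in> D k (g k) i" for i
      proof (cases "i \<le> h k")
        case True then show ?thesis using Di' base by blast
      next
        case False
        then have "h k \<le> i" by simp
        then show ?thesis
        proof (induction rule: dec_induct)
          case base show ?case by (fact \<open>x \<in> D k (g k) (h k)\<close>)
        next
          case (step n)
          then have "x \<in> Y k n" using a by auto
          then show ?case using step.IH unfolding Y_def by blast
        qed
      qed
      then show "x \<in> F k (g k)" using DF by blast
    qed
  qed
  then show ?thesis by blast
qed


lemma sigma_set:
  fixes F :: "nat \<Rightarrow> 'a::topological_space set"
  assumes QN: "QN_space TYPE('a)"
    and hyp: "\<forall>U::'a set. open U \<longrightarrow>
             (\<exists>\<C>. countable \<C> \<and> (\<forall>C\<in>\<C>. open C \<and> closed C) \<and> U = \<Union>\<C>)"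
    and cl: "\<And>n. closed (F n)"
  shows "Fsig (- \<Union>(range F))"
proof -
  define F' where "F' n = (\<Union>j\<in>{..n}. F j)" for n
  have F'cl: "\<And>n. closed (F' n)" unfolding F'_def using cl by (intro closed_UN) auto
  have F'mono: "\<And>n. F' n \<subseteq> F' (Suc n)" unfolding F'_def by (auto simp: atMost_Suc)
  have FF': "\<And>j. F j \<subseteq> F' j" unfolding F'_def by auto
  have F'F: "\<And>n. F' n \<subseteq> \<Union>(range F)" unfolding F'_def by auto
  obtain D :: "nat \<Rightarrow> nat \<Rightarrow> 'a set" where D: "(\<forall>m i. clopen (D m i)) \<and> (\<forall>m i. D m i \<subseteq> D (Suc m) i)
     \<and> (\<forall>m i. D m (Suc i) \<subseteq> D m i) \<and> (\<forall>m i. F' m \<subseteq> D m i) \<and> (\<forall>m x. (\<forall>i. x \<in> D m i) \<longrightarrow> x \<in> F' m)"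
    using closed_approx[OF hyp, of F', OF F'cl F'mono] by blast
  have Dcl: "\<And>m i. clopen (D m i)" using D by simp
  have Di: "\<And>m i. D m (Suc i) \<subseteq> D m i" using D by simp
  have FD: "\<And>m i. F' m \<subseteq> D m i" using D by simp
  have DF: "\<And>m x. (\<forall>i. x \<in> D m i) \<Longrightarrow> x \<in> F' m" using D by simp
  have Di': "D m i' \<subseteq> D m i" if "i \<le> i'" for m i i'
    by (rule lift_Suc_antimono_le[of "\<lambda>i. D m i"]) (simp_all add: Di that)
  define G where "G n m = - D n m \<union> F' m" for n m
  have Gcl: "\<And>n m. closed (G n m)" unfolding G_def using Dcl F'cl
    by (intro closed_Un closed_Compl) (auto simp: clopen_def)
  have Gmono: "\<And>n m. G n m \<subseteq> G n (Suc m)" unfolding G_def using Di F'mono by blast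
  have Gcov: "\<And>n x. \<exists>m. x \<in> G n m"
  proof -
    fix n x
    show "\<exists>m. x \<in> G n m"
    proof (cases "x \<in> \<Union>(range F)")
      case True
      then obtain j where "x \<in> F j" by blast
      then show ?thesis using FF' unfolding G_def by blast
    next
      case False
      then have "x \<notin> F' n" using F'F by blast
      then obtain i where "x \<notin> D n i" using DF by blast
      then show ?thesis unfolding G_def by blast
    qed
  qed
  obtain g where g: "\<forall>x. eventually (\<lambda>n. x \<in> G n (g n)) sequentially"
    using H_closed[where F=G, OF QN hyp Gcl Gmono Gcov] by blast
  define V where "V k = (\<Union>n. D n (max (g n) k))" for k
  have Vopen: "open (V k)" for k unfolding V_def using Dcl by (intro open_UN) (auto simp: clopen_def)
  have eq: "\<Union>(range F) = (\<Inter>k. V k)"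
  proof
    show "\<Union>(range F) \<subseteq> (\<Inter>k. V k)"
    proof
      fix x assume "x \<in> \<Union>(range F)"
      then obtain j where "x \<in> F j" by blast
      then have "x \<in> F' j" using FF' by blast
      then show "x \<in> (\<Inter>k. V k)" unfolding V_def using FD by blast
    qed
  next
    show "(\<Inter>k. V k) \<subseteq> \<Union>(range F)"
    proof
      fix x assume xV: "x \<in> (\<Inter>k. V k)"
      show "x \<in> \<Union>(range F)"
      proof (rule ccontr)
        assume nF: "x \<notin> \<Union>(range F)"
        then have nF': "\<And>n. x \<notin> F' n" using F'F by blast
        obtain N where N: "\<And>n. n \<ge> N \<Longrightarrow> x \<in> G n (g n)"
          using g unfolding eventually_sequentially by blast
        have "\<forall>n. \<exists>i. x \<notin> D n i" using DF nF' by blast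
        then obtain ii where ii: "\<And>n. x \<notin> D n (ii n)" by metis
        define K where "K = (\<Sum>n<N. ii n)"
        have "x \<notin> D n (max (g n) K)" for n
        proof (cases "n < N")
          case True
          have "ii n \<le> K" unfolding K_def using True
            by (intro member_le_sum) auto
          then have "ii n \<le> max (g n) K" by simp
          then show ?thesis using Di' ii by blast
        next
          case False
          then have "x \<in> G n (g n)" using N by simp
          then have "x \<notin> D n (g n)" using nF' unfolding G_def by blast
          then show ?thesis using Di'[of "g n" "max (g n) K" n] by auto
        qed
        then have "x \<notin> V K" unfolding V_def by blast
        then show False using xV by blast
      qed
    qed
  qed
  have e2: "- \<Union>(range F) = \<Union>(range (\<lambda>k. - V k))" unfolding eq by (simp add: uminus_Inf image_image)
  have c2: "\<forall>k. closed (- V k)" using Vopen by (simp add: closed_Compl)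
  show ?thesis unfolding Fsig_def using e2 c2 by (intro exI[of _ "\<lambda>k. - V k"] conjI)
qed


lemma borel_Fsig:
  fixes A :: "'a::topological_space set"
  assumes QN: "QN_space TYPE('a)"
    and hyp: "\<forall>U::'a set. open U \<longrightarrow>
             (\<exists>\<C>. countable \<C> \<and> (\<forall>C\<in>\<C>. open C \<and> closed C) \<and> U = \<Union>\<C>)"
    and A: "A \<in> sets borel"
  shows "Fsig A"
proof -
  have "A \<in> sigma_sets UNIV {S. open S}" using A by (simp add: sets_borel)
  then show ?thesis
  proof (induction rule: sigma_sets.induct)
    case (Basic a)
    then have "open a" by simp
    then obtain c :: "nat \<Rightarrow> 'a set" where c: "\<forall>i. clopen (c i)" "a = \<Union>(range c)"
      using open_clopen_seq[OF hyp] by blast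
    show ?case unfolding Fsig_def using c unfolding clopen_def by (intro exI[of _ c]) auto
  next
    case Empty
    show ?case unfolding Fsig_def by (intro exI[of _ "\<lambda>_. {}"]) auto
  next
    case (Compl a)
    then obtain F :: "nat \<Rightarrow> 'a set" where F: "\<forall>n. closed (F n)" "a = \<Union>(range F)"
      unfolding Fsig_def by blast
    have "Fsig (- \<Union>(range F))" by (rule sigma_set[OF QN hyp]) (use F(1) in blast)
    moreover have "UNIV - a = - \<Union>(range F)" using F(2) by blast
    ultimately show ?case by simp
  next
    case (Union a)
    then have "\<forall>i. \<exists>F :: nat \<Rightarrow> 'a set. (\<forall>n. closed (F n)) \<and> a i = \<Union>(range F)"
      unfolding Fsig_def by blast
    from choice[OF this] obtain F :: "nat \<Rightarrow> nat \<Rightarrow> 'a set"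
      where F: "\<forall>i. (\<forall>n. closed (F i n)) \<and> a i = \<Union>(range (F i))" by blast
    define H where "H m = F (fst (prod_decode m)) (snd (prod_decode m))" for m
    have Hc: "\<forall>m. closed (H m)" unfolding H_def using F by blast
    have Heq: "(\<Union>i. a i) = \<Union>(range H)"
    proof
      show "(\<Union>i. a i) \<subseteq> \<Union>(range H)"
      proof
        fix x assume "x \<in> (\<Union>i. a i)"
        then obtain i where "x \<in> a i" by blast
        moreover have "a i = \<Union>(range (F i))" using F by blast
        ultimately obtain n where "x \<in> F i n" by blast
        moreover have "H (prod_encode (i, n)) = F i n" unfolding H_def by simp
        ultimately have "x \<in> H (prod_encode (i, n))" by simp
        then show "x \<in> \<Union>(range H)" by (rule UN_I[OF UNIV_I])
      qed
    next
      show "\<Union>(range H) \<subseteq> (\<Union>i. a i)"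
      proof
        fix x assume "x \<in> \<Union>(range H)"
        then obtain m where xm: "x \<in> H m" by blast
        define i where "i = fst (prod_decode m)"
        have "x \<in> \<Union>(range (F i))" using xm unfolding H_def i_def by (rule UN_I[OF UNIV_I])
        moreover have "a i = \<Union>(range (F i))" using F by blast
        ultimately show "x \<in> (\<Union>i. a i)" by blast
      qed
    qed
    show ?case unfolding Fsig_def using Hc Heq by (intro exI[of _ H] conjI) auto
  qed
qed

lemma H_Fsig:
  fixes A :: "nat \<Rightarrow> nat \<Rightarrow> 'a::topological_space set"
  assumes QN: "QN_space TYPE('a)"
    and hyp: "\<forall>U::'a set. open U \<longrightarrow>
             (\<exists>\<C>. countable \<C> \<and> (\<forall>C\<in>\<C>. open C \<and> closed C) \<and> U = \<Union>\<C>)"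
    and fs: "\<And>k m. Fsig (A k m)" and mono: "\<And>k m. A k m \<subseteq> A k (Suc m)"
    and cov: "\<And>k x. \<exists>m. x \<in> A k m"
  shows "\<exists>g::nat\<Rightarrow>nat. \<forall>x. eventually (\<lambda>k. x \<in> A k (g k)) sequentially"
proof -
  have "\<forall>p. \<exists>F :: nat \<Rightarrow> 'a set. (\<forall>n. closed (F n)) \<and> A (fst p) (snd p) = \<Union>(range F)"
    using fs unfolding Fsig_def by blast
  from choice[OF this] obtain F0 :: "nat \<times> nat \<Rightarrow> nat \<Rightarrow> 'a set"
    where F0: "\<forall>p. (\<forall>n. closed (F0 p n)) \<and> A (fst p) (snd p) = \<Union>(range (F0 p))" by blast
  define F where "F k m i = F0 (k, m) i" for k m i
  have Fcl: "\<And>k m i. closed (F k m i)" unfolding F_def using F0 by blast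
  have AF: "\<And>k m. A k m = \<Union>(range (F k m))" unfolding F_def using F0 by (metis fst_conv snd_conv)
  have Am: "A k m \<subseteq> A k m'" if "m \<le> m'" for k m m'
    by (rule lift_Suc_mono_le[of "\<lambda>m. A k m"]) (simp_all add: mono that)
  define B where "B k n = (\<Union>m\<in>{..n}. \<Union>i\<in>{..n}. F k m i)" for k n
  have Bcl: "\<And>k n. closed (B k n)" unfolding B_def using Fcl by (intro closed_UN) auto
  have Bmono: "\<And>k n. B k n \<subseteq> B k (Suc n)" unfolding B_def by force
  have Bcov: "\<And>k x. \<exists>n. x \<in> B k n"
  proof -
    fix k x
    obtain m where "x \<in> A k m" using cov by blast
    then obtain i where "x \<in> F k m i" using AF by blast
    then have "x \<in> B k (max m i)" unfolding B_def by force
    then show "\<exists>n. x \<in> B k n" by blast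
  qed
  have BA: "B k n \<subseteq> A k n" for k n
  proof
    fix x assume "x \<in> B k n"
    then obtain m i where "m \<le> n" "x \<in> F k m i" unfolding B_def by blast
    then have "x \<in> A k m" using AF by blast
    then show "x \<in> A k n" using Am[OF \<open>m \<le> n\<close>] by blast
  qed
  obtain g where g: "\<forall>x. eventually (\<lambda>k. x \<in> B k (g k)) sequentially"
    using H_closed[where F=B, OF QN hyp Bcl Bmono Bcov] by blast
  have "\<forall>x. eventually (\<lambda>k. x \<in> A k (g k)) sequentially"
  proof
    fix x show "eventually (\<lambda>k. x \<in> A k (g k)) sequentially"
      using g[rule_format, of x] by (rule eventually_mono) (use BA in blast)
  qed
  then show ?thesis by blast
qed


lemma fwd:
  fixes \<Psi> :: "'a::topological_space \<Rightarrow> (nat \<Rightarrow> nat)"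
  assumes QN: "QN_space TYPE('a)"
    and hyp: "\<forall>U::'a set. open U \<longrightarrow>
             (\<exists>\<C>. countable \<C> \<and> (\<forall>C\<in>\<C>. open C \<and> closed C) \<and> U = \<Union>\<C>)"
    and B: "Borel_function \<Psi>"
  shows "bounded_baire (range \<Psi>)"
proof -
  define A where "A k m = \<Psi> -` {f. f k \<le> m}" for k m
  have op: "open {f::nat\<Rightarrow>nat. f k \<le> m}" for k m
  proof -
    have eq: "{f::nat\<Rightarrow>nat. f k \<le> m} = (\<lambda>f. f k) -` {..m} \<inter> UNIV" by auto
    have "continuous_on UNIV (\<lambda>f::nat\<Rightarrow>nat. f k)" by simp
    then show ?thesis unfolding eq using continuous_on_open_vimage[OF open_UNIV] open_discrete by blast
  qed
  have fs: "Fsig (A k m)" for k m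
    using borel_Fsig[OF QN hyp] B op unfolding Borel_function_def A_def by blast
  have mono: "A k m \<subseteq> A k (Suc m)" for k m unfolding A_def by auto
  have cov: "\<exists>m. x \<in> A k m" for k x unfolding A_def by auto
  obtain g where g: "\<forall>x. eventually (\<lambda>k. x \<in> A k (g k)) sequentially"
    using H_Fsig[where A=A, OF QN hyp fs mono cov] by blast
  have "\<forall>f\<in>range \<Psi>. \<forall>\<^sub>F n in sequentially. f n \<le> g n"
  proof
    fix f assume "f \<in> range \<Psi>"
    then obtain x where fx: "f = \<Psi> x" by blast
    show "\<forall>\<^sub>F n in sequentially. f n \<le> g n"
      using g[rule_format, of x] unfolding fx A_def by simp
  qed
  then show ?thesis unfolding bounded_baire_def by blast
qed

lemma bwd:
  assumes B: "\<forall>\<Psi> :: 'a::topological_space \<Rightarrow> (nat \<Rightarrow> nat). Borel_function \<Psi> \<longrightarrow> bounded_baire (range \<Psi>)"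
  shows "QN_space TYPE('a)"
  unfolding QN_space_def
proof (intro allI impI)
  fix fs :: "nat \<Rightarrow> 'a \<Rightarrow> real"
  assume a: "(\<forall>n. continuous_on UNIV (fs n)) \<and> (\<forall>x. (\<lambda>n. fs n x) \<longlonglongrightarrow> 0)"
  then have cont: "\<And>n. continuous_on UNIV (fs n)" and conv: "\<And>x. (\<lambda>n. fs n x) \<longlonglongrightarrow> 0" by auto
  have ex: "\<exists>m. \<forall>n\<ge>m. \<bar>fs n x\<bar> < (1/2::real)^k" for x k
  proof -
    obtain m where "\<forall>n\<ge>m. norm (fs n x - 0) < (1/2::real)^k"
      using LIMSEQ_D[OF conv, of "(1/2)^k" x] by auto
    then show ?thesis by auto
  qed
  define \<Psi> where "\<Psi> x k = (LEAST m. \<forall>n\<ge>m. \<bar>fs n x\<bar> < (1/2::real)^k)" for x k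
  have PsiI: "\<And>n. n \<ge> \<Psi> x k \<Longrightarrow> \<bar>fs n x\<bar> < (1/2::real)^k" for x k
    unfolding \<Psi>_def using LeastI_ex[OF ex[of x k]] by blast
  have Psi_le: "\<Psi> x k \<le> m \<longleftrightarrow> (\<forall>n\<ge>m. \<bar>fs n x\<bar> < (1/2::real)^k)" for x k m
  proof
    assume "\<Psi> x k \<le> m" then show "\<forall>n\<ge>m. \<bar>fs n x\<bar> < (1/2::real)^k" using PsiI by auto
  next
    assume "\<forall>n\<ge>m. \<bar>fs n x\<bar> < (1/2::real)^k" then show "\<Psi> x k \<le> m"
      unfolding \<Psi>_def by (rule Least_le)
  qed
  have [measurable]: "\<And>n. fs n \<in> borel_measurable borel"
    using cont by (intro borel_measurable_continuous_onI)
  have le_meas: "{x. \<Psi> x k \<le> m} \<in> sets borel" for k m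
  proof -
    have "{x. \<forall>n\<ge>m. \<bar>fs n x\<bar> < (1/2::real)^k} \<in> sets borel" by measurable
    then show ?thesis using Psi_le by simp
  qed
  have coord: "(\<lambda>x. \<Psi> x k) \<in> borel_measurable borel" for k
  proof -
    have "(\<lambda>x. \<Psi> x k) \<in> measurable borel (count_space UNIV)"
      unfolding measurable_count_space_eq2_countable
    proof (intro conjI ballI)
      show "(\<lambda>x. \<Psi> x k) \<in> space borel \<rightarrow> UNIV" by simp
      fix a :: nat
      have "(\<lambda>x. \<Psi> x k) -` {a} = {x. \<Psi> x k \<le> a} - (if a = 0 then {} else {x. \<Psi> x k \<le> a - 1})"
        by auto
      moreover have "{x. \<Psi> x k \<le> a} - (if a = 0 then {} else {x. \<Psi> x k \<le> a - 1}) \<in> sets borel"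
      proof (cases "a = 0")
        case True
        have eq: "{x. \<Psi> x k \<le> a} - (if a = 0 then {} else {x. \<Psi> x k \<le> a - 1}) = {x. \<Psi> x k \<le> a}"
          using True by simp
        show ?thesis unfolding eq by (rule le_meas)
      next
        case False
        have eq: "{x. \<Psi> x k \<le> a} - (if a = 0 then {} else {x. \<Psi> x k \<le> a - 1}) = {x. \<Psi> x k \<le> a} - {x. \<Psi> x k \<le> a - 1}"
          using False by simp
        show ?thesis unfolding eq by (intro sets.Diff le_meas)
      qed
      ultimately show "(\<lambda>x. \<Psi> x k) -` {a} \<inter> space borel \<in> sets borel" by simp
    qed
    then show ?thesis
      using measurable_cong_sets[OF refl sets_borel_eq_count_space] by blast
  qed
  have Pmeas: "\<Psi> \<in> borel_measurable borel"
    by (rule measurable_coordinatewise_then_product) (rule coord)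
  have "Borel_function \<Psi>" unfolding Borel_function_def
    using measurable_sets_borel[OF Pmeas] borel_open by blast
  then obtain g where g: "\<forall>f\<in>range \<Psi>. \<forall>\<^sub>F n in sequentially. f n \<le> g n"
    using B unfolding bounded_baire_def by blast
  define G where "G k = k + (\<Sum>j\<le>k. g j)" for k
  have Gsuc: "G k < G (Suc k)" for k unfolding G_def by simp
  have Gmono: "G k \<le> G k'" if "k \<le> k'" for k k'
    by (rule lift_Suc_mono_le[of G]) (simp_all add: Gsuc less_imp_le that)
  have gG: "g k \<le> G k" for k unfolding G_def
    using member_le_sum[of k "{..k}" g] by simp
  have kG: "k \<le> G k" for k unfolding G_def by simp
  define h where "h n = (LEAST k. n < G (Suc k))" for n
  have hex: "\<exists>k. n < G (Suc k)" for n using kG[of "Suc n"] by (intro exI[of _ n]) simp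
  have hI: "n < G (Suc (h n))" for n unfolding h_def by (rule LeastI_ex[OF hex])
  have hG: "G (h n) \<le> n" if "G 0 \<le> n" for n
  proof (cases "h n")
    case 0 then show ?thesis using that by simp
  next
    case (Suc j)
    then have "j < h n" by simp
    then have "\<not> n < G (Suc j)" unfolding h_def by (rule not_less_Least)
    then show ?thesis using Suc by simp
  qed
  have hge: "K \<le> h n" if "G K \<le> n" for K n
  proof (rule ccontr)
    assume "\<not> K \<le> h n"
    then have "Suc (h n) \<le> K" by simp
    then have "G (Suc (h n)) \<le> G K" by (rule Gmono)
    then show False using hI[of n] that by simp
  qed
  define \<epsilon> where "\<epsilon> n = (1/2::real)^(h n)" for n
  have epos: "\<forall>n. \<epsilon> n > 0" unfolding \<epsilon>_def by simp
  have elim: "\<epsilon> \<longlonglongrightarrow> 0"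
  proof (rule tendstoI)
    fix e :: real assume e: "e > 0"
    obtain K where K: "(1/2::real)^K < e" using real_arch_pow_inv[OF e, of "1/2"] by auto
    show "\<forall>\<^sub>F n in sequentially. dist (\<epsilon> n) 0 < e"
      unfolding eventually_sequentially
    proof (intro exI allI impI)
      fix n assume "G K \<le> n"
      then have "K \<le> h n" by (rule hge)
      then have a: "(1/2::real)^(h n) \<le> (1/2)^K" by (intro power_decreasing) auto
      have "dist (\<epsilon> n) 0 = (1/2::real)^(h n)" unfolding \<epsilon>_def by simp
      then show "dist (\<epsilon> n) 0 < e" using K a by linarith
    qed
  qed
  have ev: "\<forall>x. \<forall>\<^sub>F n in sequentially. dist (fs n x) 0 < \<epsilon> n"
  proof
    fix x
    have "\<forall>\<^sub>F k in sequentially. \<Psi> x k \<le> g k" using g by auto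
    then obtain K where K: "\<And>k. k \<ge> K \<Longrightarrow> \<Psi> x k \<le> g k"
      unfolding eventually_sequentially by blast
    show "\<forall>\<^sub>F n in sequentially. dist (fs n x) 0 < \<epsilon> n"
      unfolding eventually_sequentially
    proof (intro exI allI impI)
      fix n assume nK: "G K \<le> n"
      then have hK: "K \<le> h n" by (rule hge)
      have "G 0 \<le> G K" by (rule Gmono) simp
      then have "G (h n) \<le> n" using nK by (intro hG) simp
      moreover have "\<Psi> x (h n) \<le> G (h n)" using K[OF hK] gG[of "h n"] by simp
      ultimately have "\<Psi> x (h n) \<le> n" by simp
      then have "\<bar>fs n x\<bar> < (1/2)^(h n)" by (rule PsiI)
      then show "dist (fs n x) 0 < \<epsilon> n" unfolding \<epsilon>_def by simp
    qed
  qed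
  show "quasi_normal_limit fs (\<lambda>x. 0)"
    unfolding quasi_normal_limit_def using epos elim ev by blast
qed


theorem mainTheorem7:
  assumes "\<forall>U::'a::topological_space set. open U \<longrightarrow>
             (\<exists>\<C>. countable \<C> \<and> (\<forall>C\<in>\<C>. open C \<and> closed C) \<and> U = \<Union>\<C>)"
  shows "QN_space TYPE('a) \<longleftrightarrow>
           (\<forall>\<Psi> :: 'a \<Rightarrow> (nat \<Rightarrow> nat). Borel_function \<Psi> \<longrightarrow> bounded_baire (range \<Psi>))"
  using fwd[OF _ assms] bwd by blast

end
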